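(* Let $\lambda=[8,8,8,8,4,4,4,4]$ and $\mu=[16,\underbrace{2,\ldots,2}_{16},\underbrace{1,\ldots,1}_{16}]$. Then $\|\lambda\|_p\le\|\mu\|_p$ for all $p\in[1,\infty]$ (so $\lambda$ bulk-embeds into $\mu$), with equality at $p=\ln(1+\sqrt5)/\ln 2>1$; consequently $\lambda$ does not stably embed into $\mu$. Moreover $\lambda\not\preccurlyeq_S\mu$.
   Context: Partitions are finite nonincreasing sequences of positive integers. For $p\in[1,\infty)$, $\|\lambda\|_p=(\sum_i\lambda_i^p)^{1/p}$ and $\|\lambda\|_\infty=\max_i\lambda_i$. The product $\lambda\times\nu$ is the partition of all products $\lambda_i\nu_j$, reordered nonincreasingly. $\lambda=[\lambda_1,\ldots,\lambda_m]$ embeds into $\mu=[\mu_1,\ldots,\mu_n]$ if there is a map $\varphi:\{1,\ldots,m\}\to\{1,\ldots,n\}$ with $\sum_{i\in\varphi^{-1}(j)}\lambda_i\le\mu_j$ for all $j$; $\lambda$ stably embeds into $\mu$ if $\lambda\times\nu$ embeds into $\mu\times\nu$ for some partition $\nu$. $\lambda$ bulk-embeds into $\mu$ if for every rational $\epsilon>0$ there is $N$ with $\lambda^{\times N}$ embedding into $\mu^{\times N(1+\epsilon)}$ (equivalently $\|\lambda\|_p\le\|\mu\|_p$ for all $p\in[1,\infty]$). $\lambda\preccurlyeq_S\mu$ means: for every $x\in\mathbb N$, $\sum_{\lambda_i\ge x}\lambda_i\le\sum_{\mu_j\ge x}\mu_j$. *)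

theory Defs
  imports Complex_Main
begin

definition is_partition :: "nat list \<Rightarrow> bool" where
  "is_partition l \<longleftrightarrow> sorted_wrt (\<ge>) l \<and> (\<forall>x\<in>set l. 0 < x)"

definition pnorm :: "real \<Rightarrow> nat list \<Rightarrow> real" where
  "pnorm p l = (\<Sum>x\<leftarrow>l. real x powr p) powr (1 / p)"

definition infnorm :: "nat list \<Rightarrow> nat" where
  "infnorm l = (if l = [] then 0 else Max (set l))"

definition ptimes :: "nat list \<Rightarrow> nat list \<Rightarrow> nat list" where
  "ptimes l n = rev (sort [a * b. a \<leftarrow> l, b \<leftarrow> n])"

definition embeds :: "nat list \<Rightarrow> nat list \<Rightarrow> bool" where
  "embeds l m \<longleftrightarrow> (\<exists>\<phi>. (\<forall>i<length l. \<phi> i < length m) \<and>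
     (\<forall>j<length m. (\<Sum>i\<in>{i. i < length l \<and> \<phi> i = j}. l ! i) \<le> m ! j))"

definition stably_embeds :: "nat list \<Rightarrow> nat list \<Rightarrow> bool" where
  "stably_embeds l m \<longleftrightarrow>
     (\<exists>n. is_partition n \<and> n \<noteq> [] \<and> embeds (ptimes l n) (ptimes m n))"

definition S_le :: "nat list \<Rightarrow> nat list \<Rightarrow> bool" where
  "S_le l m \<longleftrightarrow> (\<forall>x::nat. sum_list (filter (\<lambda>a. x \<le> a) l) \<le> sum_list (filter (\<lambda>a. x \<le> a) m))"

end

theory Submission
  imports Defs "HOL-Library.Multiset"
begin

definition F :: "real \<Rightarrow> nat list \<Rightarrow> real" where
  "F p l = sum_list (map (\<lambda>x. real x powr p) l)"

lemma F_mset: "mset xs = mset ys \<Longrightarrow> F p xs = F p ys"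
  unfolding F_def by (metis mset_map sum_mset_sum_list)

lemma F_concat: "F p (concat (map (\<lambda>a. map (\<lambda>b. a * b) n) l)) = F p l * F p n"
proof (induction l)
  case Nil
  then show ?case by (simp add: F_def)
next
  case (Cons a l)
  have "F p (map (\<lambda>b. a * b) n) = real a powr p * F p n"
    unfolding F_def
    by (induction n) (simp_all add: powr_mult distrib_left)
  then show ?case using Cons by (simp add: F_def distrib_right)
qed

lemma F_ptimes: "F p (ptimes l n) = F p l * F p n"
  unfolding ptimes_def
  by (subst F_mset[of _ "concat (map (\<lambda>a. map (\<lambda>b. a * b) n) l)"])
     (simp_all add: F_concat)

lemma length_ptimes: "length (ptimes l n) = length l * length n"
  unfolding ptimes_def by (induction l) simp_all

lemma set_ptimes: "x \<in> set (ptimes l n) \<Longrightarrow> \<exists>a\<in>set l. \<exists>b\<in>set n. x = a * b"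
  unfolding ptimes_def by auto

lemma superadd2:
  fixes a b p :: real
  assumes "0 \<le> a" "0 \<le> b" "1 \<le> p"
  shows "a powr p + b powr p \<le> (a + b) powr p"
proof (cases "a + b = 0")
  case True
  then have "a = 0" "b = 0" using assms by auto
  then show ?thesis using assms by simp
next
  case False
  then have s: "a + b > 0" using assms by simp
  have "a powr p = (a/(a+b)) powr p * (a+b) powr p"
    using assms s by (simp add: powr_divide)
  also have "\<dots> \<le> (a/(a+b)) powr 1 * (a+b) powr p"
    using assms s by (intro mult_right_mono powr_mono') auto
  finally have 1: "a powr p \<le> a/(a+b) * (a+b) powr p" using assms s by simp
  have "b powr p = (b/(a+b)) powr p * (a+b) powr p"
    using assms s by (simp add: powr_divide)
  also have "\<dots> \<le> (b/(a+b)) powr 1 * (a+b) powr p"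
    using assms s by (intro mult_right_mono powr_mono') auto
  finally have 2: "b powr p \<le> b/(a+b) * (a+b) powr p" using assms s by simp
  have "a/(a+b) * (a+b) powr p + b/(a+b) * (a+b) powr p = (a+b) powr p"
    using s by (simp add: add_divide_distrib[symmetric] ring_distribs(2)[symmetric])
  then show ?thesis using 1 2 by linarith
qed

lemma superadd:
  fixes g :: "'a \<Rightarrow> real"
  assumes "finite A" "\<And>x. x \<in> A \<Longrightarrow> 0 \<le> g x" "1 \<le> p"
  shows "(\<Sum>x\<in>A. g x powr p) \<le> (\<Sum>x\<in>A. g x) powr p"
  using assms
proof (induction A rule: finite_induct)
  case empty
  then show ?case by simp
next
  case (insert x F)
  have "(\<Sum>x\<in>insert x F. g x powr p) = g x powr p + (\<Sum>x\<in>F. g x powr p)"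
    using insert by simp
  also have "\<dots> \<le> g x powr p + (\<Sum>x\<in>F. g x) powr p" using insert by simp
  also have "\<dots> \<le> (g x + (\<Sum>x\<in>F. g x)) powr p"
    using insert by (intro superadd2) (auto intro: sum_nonneg)
  finally show ?case using insert by simp
qed

lemma embeds_F_less:
  assumes "embeds L M" "1 \<le> p" "length L < length M" "\<forall>x\<in>set M. 0 < x"
  shows "F p L < F p M"
proof -
  obtain \<phi> where phi: "\<forall>i<length L. \<phi> i < length M"
    "\<forall>j<length M. (\<Sum>i\<in>{i. i < length L \<and> \<phi> i = j}. L ! i) \<le> M ! j"
    using assms(1) unfolding embeds_def by blast
  let ?h = "\<lambda>i. real (L ! i) powr p"
  have "card (\<phi> ` {..<length L}) \<le> length L" using card_image_le by fastforce
  have "\<not> {..<length M} \<subseteq> \<phi> ` {..<length L}"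
  proof
    assume "{..<length M} \<subseteq> \<phi> ` {..<length L}"
    then have "card {..<length M} \<le> card (\<phi> ` {..<length L})" by (intro card_mono) auto
    then show False using assms(3) \<open>card (\<phi> ` {..<length L}) \<le> length L\<close> by simp
  qed
  then obtain j0 where j0: "j0 < length M" "j0 \<notin> \<phi> ` {..<length L}" by auto
  have FL: "F p L = (\<Sum>i<length L. ?h i)"
    unfolding F_def by (simp add: sum_list_sum_nth atLeast0LessThan)
  have FM: "F p M = (\<Sum>j<length M. real (M ! j) powr p)"
    unfolding F_def by (simp add: sum_list_sum_nth atLeast0LessThan)
  have "(\<Sum>i<length L. ?h i) = (\<Sum>j<length M. \<Sum>i\<in>{i. i \<in> {..<length L} \<and> \<phi> i = j}. ?h i)"
    by (rule sum.group[symmetric]) (use phi in auto)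
  also have "\<dots> < (\<Sum>j<length M. real (M ! j) powr p)"
  proof (rule sum_strict_mono_ex1)
    show "finite {..<length M}" by simp
    show "\<forall>j\<in>{..<length M}. (\<Sum>i\<in>{i. i \<in> {..<length L} \<and> \<phi> i = j}. ?h i) \<le> real (M ! j) powr p"
    proof
      fix j assume j: "j \<in> {..<length M}"
      have "(\<Sum>i\<in>{i. i \<in> {..<length L} \<and> \<phi> i = j}. ?h i)
          \<le> (\<Sum>i\<in>{i. i \<in> {..<length L} \<and> \<phi> i = j}. real (L ! i)) powr p"
        by (rule superadd) (use assms in auto)
      also have "\<dots> \<le> real (M ! j) powr p"
      proof (rule powr_mono2)
        show "0 \<le> p" using assms by simp
        show "0 \<le> (\<Sum>i\<in>{i. i \<in> {..<length L} \<and> \<phi> i = j}. real (L ! i))" by (simp add: sum_nonneg)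
        have "(\<Sum>i\<in>{i. i < length L \<and> \<phi> i = j}. L ! i) \<le> M ! j" using phi j by auto
        then show "(\<Sum>i\<in>{i. i \<in> {..<length L} \<and> \<phi> i = j}. real (L ! i)) \<le> real (M ! j)"
          by (simp add: of_nat_sum[symmetric] del: of_nat_sum)
      qed
      finally show "(\<Sum>i\<in>{i. i \<in> {..<length L} \<and> \<phi> i = j}. ?h i) \<le> real (M ! j) powr p" .
    qed
    have emp: "{i. i \<in> {..<length L} \<and> \<phi> i = j0} = {}" using j0 by auto
    have "M ! j0 > 0" using assms(4) j0 by auto
    show "\<exists>j\<in>{..<length M}. (\<Sum>i\<in>{i. i \<in> {..<length L} \<and> \<phi> i = j}. ?h i) < real (M ! j) powr p"
    proof (rule bexI[of _ j0])
      show "(\<Sum>i\<in>{i. i \<in> {..<length L} \<and> \<phi> i = j0}. ?h i) < real (M ! j0) powr p"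
        unfolding emp using \<open>M ! j0 > 0\<close> by simp
    qed (use j0 in simp)
  qed
  finally show ?thesis using FL FM by simp
qed

lemma F_lam: "F p [8,8,8,8,4,4,4,4] = 4 * (2 powr p)^3 + 4 * (2 powr p)^2"
proof -
  have a: "(8::real) powr p = (2 powr p)^3"
    by (simp add: powr_power powr_powr[symmetric])
  have b: "(4::real) powr p = (2 powr p)^2"
    by (simp add: powr_power powr_powr[symmetric])
  show ?thesis unfolding F_def using a b by simp
qed

lemma F_mu: "F p ([16] @ replicate 16 2 @ replicate 16 1) = (2 powr p)^4 + 16 * (2 powr p) + 16"
proof -
  have a: "(16::real) powr p = (2 powr p)^4"
    by (simp add: powr_power powr_powr[symmetric])
  have r: "\<And>c n. sum_list (map (\<lambda>x. real x powr p) (replicate n c)) = n * (real c powr p)"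
    by (simp add: sum_list_replicate)
  show ?thesis unfolding F_def using a by (simp only: map_append sum_list_append r) simp
qed

lemma diff_sq: "(t::real)^4 + 16 * t + 16 - (4 * t^3 + 4 * t^2) = (t^2 - 2*t - 4)^2"
  by (simp add: power2_eq_square power3_eq_cube power4_eq_xxxx algebra_simps)

theorem mainTheorem7:
  fixes lam mu :: "nat list"
  assumes "lam = [8,8,8,8,4,4,4,4]"
    and "mu = [16] @ replicate 16 2 @ replicate 16 1"
  shows "(\<forall>p::real. 1 \<le> p \<longrightarrow> pnorm p lam \<le> pnorm p mu)
       \<and> infnorm lam \<le> infnorm mu
       \<and> ln (1 + sqrt 5) / ln 2 > 1
       \<and> pnorm (ln (1 + sqrt 5) / ln 2) lam = pnorm (ln (1 + sqrt 5) / ln 2) mu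
       \<and> \<not> stably_embeds lam mu
       \<and> \<not> S_le lam mu"
proof -
  have pn: "pnorm p l = F p l powr (1/p)" for p l unfolding pnorm_def F_def by simp
  have Fle: "F p lam \<le> F p mu" for p
    using diff_sq[of "2 powr p"] unfolding assms F_lam F_mu
    by (smt (verit) zero_le_power2)
  have Fnn: "0 \<le> F p l" for p l unfolding F_def by (induction l) auto
  have A: "\<forall>p::real. 1 \<le> p \<longrightarrow> pnorm p lam \<le> pnorm p mu"
    using Fle Fnn by (auto simp: pn intro: powr_mono2)
  have B: "infnorm lam \<le> infnorm mu" unfolding assms infnorm_def by simp
  define p0 where "p0 = ln (1 + sqrt 5) / ln 2"
  have s5: "sqrt 5 > 1" by simp
  have s0: "0 < 1 + sqrt 5" using s5 by linarith
  have "ln 2 < ln (1 + sqrt 5)" using s5 s0 by (subst ln_less_cancel_iff) auto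
  then have C: "p0 > 1" unfolding p0_def by simp
  have t: "2 powr p0 = 1 + sqrt 5"
    unfolding p0_def powr_def using s0 by simp
  have sq: "(sqrt 5)^2 = 5" by simp
  have Feq: "F p0 lam = F p0 mu"
  proof -
    have "(2 powr p0)^2 - 2 * 2 powr p0 - 4 = 0" unfolding t using sq
      by (simp add: power2_eq_square algebra_simps)
    then show ?thesis using diff_sq[of "2 powr p0"] unfolding assms F_lam F_mu by simp
  qed
  have D: "pnorm p0 lam = pnorm p0 mu" using Feq by (simp add: pn)
  have E: "\<not> stably_embeds lam mu"
  proof
    assume "stably_embeds lam mu"
    then obtain n where n: "is_partition n" "n \<noteq> []" "embeds (ptimes lam n) (ptimes mu n)"
      unfolding stably_embeds_def by blast
    have len: "length (ptimes lam n) < length (ptimes mu n)"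
      using n(2) unfolding length_ptimes assms by simp
    have pos: "\<forall>x\<in>set (ptimes mu n). 0 < x"
    proof
      fix x assume "x \<in> set (ptimes mu n)"
      then obtain a b where "a \<in> set mu" "b \<in> set n" "x = a * b" using set_ptimes by blast
      moreover have "0 < b" using n(1) \<open>b \<in> set n\<close> unfolding is_partition_def by auto
      moreover have "0 < a" using \<open>a \<in> set mu\<close> unfolding assms by auto
      ultimately show "0 < x" by simp
    qed
    have "F p0 (ptimes lam n) < F p0 (ptimes mu n)"
      using embeds_F_less[OF n(3) _ len pos] C by simp
    then show False using Feq by (simp add: F_ptimes)
  qed
  have G: "\<not> S_le lam mu"
    unfolding S_le_def assms by (intro notI) (drule spec[of _ 4], simp)
  show ?thesis using A B C D E G unfolding p0_def by blast
qed

end
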